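(* Let $\lambda>0$, $\gamma>0$, $\beta\ge 0$. Let $X$ be the Banach space of bounded analytic functions $h:[0,\lambda]\to\mathbb{R}$ with the supremum norm, $K=\{h\in X: h\ge 0,\ \|h\|_\infty\le 1\}$, and for $h\in K$ let $\Psi_h=1+\beta h$, $$D_h=\gamma\left(1+\gamma\int_0^\lambda\frac{\exp\left(-2\int_0^x\frac{\xi}{\Psi_h(\xi)}d\xi\right)}{\Psi_h(x)}\,dx\right)^{-1},$$ and $$(\tau h)(\eta)=D_h\left(\frac1\gamma+\int_0^\eta\frac{\exp\left(-2\int_0^x\frac{\xi}{\Psi_h(\xi)}d\xi\right)}{\Psi_h(x)}\,dx\right),\quad 0<\eta<\lambda.$$ Then $\tau(K)\subset K$. *)

theory Defs
  imports "HOL-Analysis.Analysis"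
begin

definition real_analytic_on :: "(real \<Rightarrow> real) \<Rightarrow> real set \<Rightarrow> bool" where
  "real_analytic_on h S \<longleftrightarrow>
     (\<forall>x\<in>S. \<exists>r>0. \<exists>a::nat \<Rightarrow> real.
        \<forall>y\<in>S. \<bar>y - x\<bar> < r \<longrightarrow> (\<lambda>n. a n * (y - x) ^ n) sums h y)"

definition X_space :: "real \<Rightarrow> (real \<Rightarrow> real) set" where
  "X_space lam = {h. real_analytic_on h {0..lam} \<and> (\<exists>B. \<forall>x\<in>{0..lam}. \<bar>h x\<bar> \<le> B)}"

definition K_set :: "real \<Rightarrow> (real \<Rightarrow> real) set" where
  "K_set lam = {h \<in> X_space lam. (\<forall>x\<in>{0..lam}. h x \<ge> 0) \<and> (\<forall>x\<in>{0..lam}. \<bar>h x\<bar> \<le> 1)}"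

definition Psi :: "real \<Rightarrow> (real \<Rightarrow> real) \<Rightarrow> real \<Rightarrow> real" where
  "Psi beta h = (\<lambda>\<xi>. 1 + beta * h \<xi>)"

definition weight :: "real \<Rightarrow> (real \<Rightarrow> real) \<Rightarrow> real \<Rightarrow> real" where
  "weight beta h x = exp (- 2 * integral {0..x} (\<lambda>\<xi>. \<xi> / Psi beta h \<xi>)) / Psi beta h x"

definition D_h :: "real \<Rightarrow> real \<Rightarrow> real \<Rightarrow> (real \<Rightarrow> real) \<Rightarrow> real" where
  "D_h lam gam beta h = gam * inverse (1 + gam * integral {0..lam} (weight beta h))"

definition tau :: "real \<Rightarrow> real \<Rightarrow> real \<Rightarrow> (real \<Rightarrow> real) \<Rightarrow> (real \<Rightarrow> real)" where
  "tau lam gam beta h = (\<lambda>\<eta>. D_h lam gam beta h * (1 / gam + integral {0..\<eta>} (weight beta h)))"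

end

theory Submission
  imports Defs "HOL-Complex_Analysis.Complex_Analysis"
begin

lemma Re_aux: "Re (c * complex_of_real t / fact n) = Re (c / fact n) * t"
proof -
  have "c * complex_of_real t / fact n = (c / fact n) * complex_of_real t" by simp
  then show ?thesis by (simp only: times_complex.sel Re_complex_of_real Im_complex_of_real)
qed

lemma holo_to_real_analytic:
  fixes T :: "complex \<Rightarrow> complex"
  assumes "open V" "T holomorphic_on V"
    and "\<And>y. y \<in> S \<Longrightarrow> complex_of_real y \<in> V \<and> T (of_real y) = of_real (f y)"
  shows "real_analytic_on f S"
  unfolding real_analytic_on_def
proof
  fix x assume x: "x \<in> S"
  then obtain r where r: "r > 0" "ball (complex_of_real x) r \<subseteq> V"
    using assms(1,3) openE by blast
  define a where "a n = Re ((deriv ^^ n) T (of_real x) / fact n)" for n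
  have "\<forall>y\<in>S. \<bar>y - x\<bar> < r \<longrightarrow> (\<lambda>n. a n * (y - x) ^ n) sums f y"
  proof (intro ballI impI)
    fix y assume y: "y \<in> S" "\<bar>y - x\<bar> < r"
    have "of_real y \<in> ball (complex_of_real x) r"
      using y by (simp add: dist_norm norm_of_real[symmetric] of_real_diff[symmetric] del: of_real_diff)
    then have "(\<lambda>n. (deriv ^^ n) T (of_real x) / (fact n) * (of_real y - of_real x)^n) sums T (of_real y)"
      using holomorphic_power_series[OF holomorphic_on_subset[OF assms(2) r(2)]] by blast
    from sums_Re[OF this] show "(\<lambda>n. a n * (y - x) ^ n) sums f y"
      using assms(3)[OF y(1)] unfolding a_def
      by (simp add: of_real_diff[symmetric] of_real_power[symmetric] Re_aux del: of_real_diff of_real_power)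
  qed
  with r show "\<exists>r>0. \<exists>a. \<forall>y\<in>S. \<bar>y - x\<bar> < r \<longrightarrow> (\<lambda>n. a n * (y - x) ^ n) sums f y" by blast
qed

lemma ftc_complex_real:
  fixes f :: "real \<Rightarrow> complex"
  assumes "a \<le> b" "\<And>s. s \<in> {a..b} \<Longrightarrow> (f has_vector_derivative of_real (g s)) (at s within {a..b})"
  shows "(g has_integral Re (f b - f a)) {a..b} \<and> f b - f a = of_real (integral {a..b} g)"
proof -
  have I: "((\<lambda>s. complex_of_real (g s)) has_integral (f b - f a)) {a..b}"
    by (rule fundamental_theorem_of_calculus[OF assms(1)]) (use assms(2) in auto)
  have R: "(g has_integral Re (f b - f a)) {a..b}"
    using has_integral_linear[OF I bounded_linear_Re] by (simp add: o_def)
  have "((\<lambda>s. 0::real) has_integral Im (f b - f a)) {a..b}"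
    using has_integral_linear[OF I bounded_linear_Im] by (simp add: o_def)
  then have "Im (f b - f a) = 0"
    using has_integral_unique has_integral_0 by blast
  moreover have "integral {a..b} g = Re (f b - f a)" using R by (rule integral_unique)
  ultimately show ?thesis using R by (simp add: complex_eq_iff)
qed

lemma real_analytic_to_holo:
  assumes "real_analytic_on h {0..lam}" "lam > 0"
  obtains U F where "open U" "F holomorphic_on U"
    "\<And>y. y \<in> {0..lam} \<Longrightarrow> complex_of_real y \<in> U \<and> F (of_real y) = of_real (h y)"
proof -
  define S where "S = {0..lam::real}"
  from assms(1) have "\<forall>x\<in>S. \<exists>r. r > 0 \<and> (\<exists>a::nat\<Rightarrow>real. \<forall>y\<in>S. \<bar>y - x\<bar> < r \<longrightarrow> (\<lambda>n. a n * (y - x) ^ n) sums h y)"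
    unfolding real_analytic_on_def S_def by blast
  then have "\<exists>r. \<forall>x\<in>S. r x > 0 \<and> (\<exists>a::nat\<Rightarrow>real. \<forall>y\<in>S. \<bar>y - x\<bar> < r x \<longrightarrow> (\<lambda>n. a n * (y - x) ^ n) sums h y)"
    by (rule bchoice)
  then obtain r where r: "\<forall>x\<in>S. r x > 0 \<and> (\<exists>a::nat\<Rightarrow>real. \<forall>y\<in>S. \<bar>y - x\<bar> < r x \<longrightarrow> (\<lambda>n. a n * (y - x) ^ n) sums h y)"
    by blast
  then have "\<forall>x\<in>S. \<exists>a::nat\<Rightarrow>real. r x > 0 \<and> (\<forall>y\<in>S. \<bar>y - x\<bar> < r x \<longrightarrow> (\<lambda>n. a n * (y - x) ^ n) sums h y)"
    by blast
  then have "\<exists>a. \<forall>x\<in>S. r x > 0 \<and> (\<forall>y\<in>S. \<bar>y - x\<bar> < r x \<longrightarrow> (\<lambda>n. a x n * (y - x) ^ n) sums h y)"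
    by (rule bchoice)
  then obtain a where ra0: "\<forall>x\<in>S. r x > 0 \<and> (\<forall>y\<in>S. \<bar>y - x\<bar> < r x \<longrightarrow> (\<lambda>n. a x n * (y - x) ^ n) sums h y)"
    by blast
  have ra: "r x > 0 \<and> (\<forall>y\<in>S. \<bar>y - x\<bar> < r x \<longrightarrow> (\<lambda>n. a x n * (y - x) ^ n) sums h y)" if "x \<in> S" for x
    using ra0 that by blast
  define \<rho> where "\<rho> x = min (r x) (lam/2)" for x
  have \<rho>pos: "\<rho> x > 0" if "x \<in> S" for x using ra[OF that] assms(2) by (simp add: \<rho>_def)
  define g where "g x z = (\<Sum>n. complex_of_real (a x n) * (z - of_real x)^n)" for x z
  have sums_g: "(\<lambda>n. complex_of_real (a x n) * (z - of_real x)^n) sums g x z"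
    if xS: "x \<in> S" and zb: "z \<in> ball (of_real x) (\<rho> x)" for x z
  proof -
    define d where "d = cmod (z - of_real x)"
    have d: "d < \<rho> x" using zb unfolding d_def by (simp add: dist_norm norm_minus_commute)
    define t where "t = (d + \<rho> x)/2"
    have t: "d < t" "t < r x" "t < lam/2" "0 \<le> d" using d \<rho>_def by (auto simp: t_def d_def)
    obtain y where y: "y \<in> S" "\<bar>y - x\<bar> = t"
    proof (cases "x + t \<le> lam")
      case True then show ?thesis using xS t by (intro that[of "x+t"]) (auto simp: S_def)
    next
      case False then show ?thesis using xS t by (intro that[of "x-t"]) (auto simp: S_def)
    qed
    have nyx: "cmod (complex_of_real y - complex_of_real x) = \<bar>y - x\<bar>"
      unfolding of_real_diff[symmetric] by (rule norm_of_real)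
    have "summable (\<lambda>n. a x n * (y-x)^n)" using ra[OF xS] y t by (auto intro: sums_summable)
    from summable_of_real[OF this]
    have "summable (\<lambda>n. complex_of_real (a x n) * complex_of_real (y-x)^n)" by simp
    then have "summable (\<lambda>n. complex_of_real (a x n) * (z - of_real x)^n)"
      by (rule powser_inside) (use y t nyx in \<open>simp add: d_def\<close>)
    then show ?thesis by (simp add: g_def summable_sums)
  qed
  have holo_g: "g x holomorphic_on ball (of_real x) (\<rho> x)" if "x \<in> S" for x
    by (rule power_series_holomorphic[where a="\<lambda>n. complex_of_real (a x n)"]) (use sums_g that in blast)
  have g_real: "g x (of_real y) = of_real (h y)" if "x \<in> S" "y \<in> S" "\<bar>y - x\<bar> < \<rho> x" for x y
  proof -
    have "(\<lambda>n. a x n * (y-x)^n) sums h y" using ra that \<rho>_def by auto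
    from sums_of_real[OF this]
    have "(\<lambda>n. complex_of_real (a x n) * (of_real y - of_real x)^n) sums complex_of_real (h y)" by simp
    moreover have "complex_of_real y \<in> ball (of_real x) (\<rho> x)" using that by (simp add: dist_real_def abs_minus_commute)
    ultimately show ?thesis using sums_g that sums_unique2 by blast
  qed
  have agree_le: "g x z = g x' z" if xS: "x \<in> S" "x' \<in> S" "x < x'"
      and zA: "z \<in> ball (of_real x) (\<rho> x) \<inter> ball (of_real x') (\<rho> x')" for x x' z
  proof -
    let ?A = "ball (complex_of_real x) (\<rho> x) \<inter> ball (of_real x') (\<rho> x')"
    have "dist (complex_of_real x) (of_real x') \<le> dist (complex_of_real x) z + dist z (of_real x')"
      by (rule dist_triangle)
    then have sep: "x' - x < \<rho> x + \<rho> x'" using zA xS(3) by (simp add: dist_real_def dist_commute)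
    define lo where "lo = max x (x' - \<rho> x')"
    define hi where "hi = min x' (x + \<rho> x)"
    have lohi: "lo < hi" using sep xS \<rho>pos by (auto simp: lo_def hi_def)
    define U where "U = complex_of_real ` {lo<..<hi}"
    have inU: "y \<in> S \<and> \<bar>y - x\<bar> < \<rho> x \<and> \<bar>y - x'\<bar> < \<rho> x'" if "y \<in> {lo<..<hi}" for y
      using that xS by (auto simp: lo_def hi_def S_def)
    have UA: "U \<subseteq> ?A" using inU by (auto simp: U_def dist_real_def abs_minus_commute)
    have zero: "g x w - g x' w = 0" if "w \<in> U" for w
      using that inU g_real xS by (auto simp: U_def)
    define m where "m = (lo+hi)/2"
    have mU: "complex_of_real m \<in> U" unfolding U_def by (rule imageI) (use lohi in \<open>simp add: m_def\<close>)
    have "complex_of_real m islimpt U" unfolding islimpt_approachable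
    proof (intro allI impI)
      fix e :: real assume e: "e > 0"
      define k where "k = min e (hi - m) / 2"
      have k: "0 < k" "k < e" "2*k \<le> hi - m" using e lohi by (auto simp: k_def m_def min_def)
      have lm: "lo < m" "m < hi" using lohi by (auto simp: m_def)
      define y where "y = m + k"
      have "y \<in> {lo<..<hi}" using k lm by (simp add: y_def)
      moreover have "y \<noteq> m" "\<bar>y - m\<bar> < e" using k by (auto simp: y_def)
      ultimately show "\<exists>x'\<in>U. x' \<noteq> complex_of_real m \<and> dist x' (complex_of_real m) < e"
        by (intro bexI[of _ "complex_of_real y"]) (auto simp: U_def dist_real_def)
    qed
    have hol: "(\<lambda>w. g x w - g x' w) holomorphic_on ?A"
      by (intro holomorphic_on_diff holomorphic_on_subset[OF holo_g]) (use xS in auto)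
    have "g x z - g x' z = 0"
      by (rule analytic_continuation[OF hol _ _ UA _ \<open>complex_of_real m islimpt U\<close> zero])
         (use zA mU UA in \<open>auto intro: convex_connected convex_Int\<close>)
    then show ?thesis by simp
  qed
  have agree: "g x z = g x' z" if "x \<in> S" "x' \<in> S"
      "z \<in> ball (of_real x) (\<rho> x)" "z \<in> ball (of_real x') (\<rho> x')" for x x' z
  proof -
    consider "x < x'" | "x = x'" | "x' < x" by linarith
    then show ?thesis
    proof cases
      case 1 then show ?thesis by (rule agree_le[OF that(1,2)]) (use that in auto)
    next
      case 2 then show ?thesis by simp
    next
      case 3
      have "g x' z = g x z" by (rule agree_le[OF that(2,1) 3]) (use that in auto)
      then show ?thesis by simp
    qed
  qed
  define U where "U = (\<Union>x\<in>S. ball (complex_of_real x) (\<rho> x))"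
  define c where "c z = (SOME x. x \<in> S \<and> z \<in> ball (complex_of_real x) (\<rho> x))" for z
  define F where "F z = g (c z) z" for z
  have Fg: "F z = g x z" if "x \<in> S" "z \<in> ball (of_real x) (\<rho> x)" for x z
  proof -
    have "c z \<in> S \<and> z \<in> ball (of_real (c z)) (\<rho> (c z))"
      unfolding c_def by (rule someI[of _ x]) (use that in auto)
    then have "g (c z) z = g x z" using that by (intro agree) auto
    then show ?thesis by (simp add: F_def)
  qed
  have "F holomorphic_on U" unfolding U_def
  proof (rule holomorphic_on_UN_open)
    fix x assume "x \<in> S"
    show "F holomorphic_on ball (complex_of_real x) (\<rho> x)"
      by (rule holomorphic_transform[OF holo_g[OF \<open>x \<in> S\<close>]]) (simp add: Fg[OF \<open>x \<in> S\<close>])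
  qed auto
  moreover have "open U" unfolding U_def by auto
  moreover have "complex_of_real y \<in> U \<and> F (of_real y) = of_real (h y)" if "y \<in> {0..lam}" for y
  proof -
    have yS: "y \<in> S" using that by (simp add: S_def)
    have "complex_of_real y \<in> ball (of_real y) (\<rho> y)" using \<rho>pos[OF yS] by simp
    then have yU: "complex_of_real y \<in> U" unfolding U_def by (rule UN_I[OF yS])
    have "F (of_real y) = g y (of_real y)"
      by (rule Fg[OF yS]) (use \<rho>pos[OF yS] in simp)
    then show ?thesis using yU g_real[OF yS yS] \<rho>pos[OF yS] by simp
  qed
  ultimately show ?thesis using that by blast
qed

theorem theorem3p3:
  fixes lam gam beta :: real
  assumes "lam > 0" and "gam > 0" and "beta \<ge> 0"
  shows "tau lam gam beta ` K_set lam \<subseteq> K_set lam"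
proof (rule image_subsetI)
  fix h assume hK: "h \<in> K_set lam"
  define S where "S = {0..lam}"
  have ha: "real_analytic_on h {0..lam}" and h0: "\<And>x. x \<in> S \<Longrightarrow> 0 \<le> h x"
    using hK by (auto simp: K_set_def X_space_def S_def)
  obtain U F where U: "open U" and FU: "F holomorphic_on U"
    and UF0: "\<And>y. y \<in> {0..lam} \<Longrightarrow> complex_of_real y \<in> U \<and> F (of_real y) = of_real (h y)"
    using real_analytic_to_holo[OF ha assms(1)] by blast
  have UF: "complex_of_real y \<in> U \<and> F (of_real y) = of_real (h y)" if "y \<in> S" for y
    using UF0 that by (simp add: S_def)
  have psi1: "Psi beta h y \<ge> 1" if "y \<in> S" for y
    using h0[OF that] assms(3) by (simp add: Psi_def)
  define N where "N = U \<inter> (\<lambda>z. 1 + complex_of_real beta * F z) -` (-{0})"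
  have "continuous_on U (\<lambda>z. 1 + complex_of_real beta * F z)"
    by (intro holomorphic_on_imp_continuous_on holomorphic_intros FU)
  then have oN: "open N" unfolding N_def by (rule continuous_open_preimage) (auto simp: U)
  have SN: "complex_of_real ` S \<subseteq> N"
  proof
    fix z assume "z \<in> complex_of_real ` S"
    then obtain y where y: "y \<in> S" "z = of_real y" by blast
    have "1 + complex_of_real beta * F z = of_real (Psi beta h y)"
      using UF[OF y(1)] y by (simp add: Psi_def)
    then show "z \<in> N" using psi1[OF y(1)] UF[OF y(1)] y by (auto simp: N_def)
  qed
  have "compact (complex_of_real ` S)"
    by (rule compact_continuous_image) (auto intro!: continuous_intros simp: S_def)
  then obtain e where e: "e > 0" "(\<Union>x\<in>complex_of_real ` S. ball x e) \<subseteq> N"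
    by (rule compact_subset_open_imp_ball_epsilon_subset[OF _ oN SN])
  define V where "V = (\<Union>y\<in>S. ball (complex_of_real y) e)"
  have oV: "open V" by (auto simp: V_def)
  have VN: "V \<subseteq> N" using e by (auto simp: V_def)
  have SV: "complex_of_real y \<in> V" if "y \<in> S" for y unfolding V_def using that e by (intro UN_I[of y]) auto
  have cS: "convex S" by (simp add: S_def)
  have cV: "convex V" unfolding convex_def
  proof (intro allI impI ballI)
    fix x z u v assume x: "x \<in> V" and z: "z \<in> V" and uv: "0 \<le> u" "0 \<le> v" "u + v = (1::real)"
    obtain y1 where y1: "y1 \<in> S" "x - of_real y1 \<in> ball 0 e"
      using x by (auto simp: V_def dist_norm)
    obtain y2 where y2: "y2 \<in> S" "z - of_real y2 \<in> ball 0 e"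
      using z by (auto simp: V_def dist_norm)
    have yS: "u *\<^sub>R y1 + v *\<^sub>R y2 \<in> S" using convexD[OF cS y1(1) y2(1)] uv by blast
    have b: "u *\<^sub>R (x - of_real y1) + v *\<^sub>R (z - of_real y2) \<in> ball 0 e"
      using convexD[OF convex_ball y1(2) y2(2)] uv by blast
    define yy where "yy = u *\<^sub>R y1 + v *\<^sub>R y2"
    define w where "w = u *\<^sub>R (x - complex_of_real y1) + v *\<^sub>R (z - complex_of_real y2)"
    have eq: "u *\<^sub>R x + v *\<^sub>R z = complex_of_real yy + w"
      by (simp add: yy_def w_def scaleR_conv_of_real algebra_simps)
    have nw: "norm w < e" using b by (simp add: w_def)
    have "complex_of_real yy + w \<in> ball (complex_of_real yy) e" using nw by (simp add: dist_norm)
    then show "u *\<^sub>R x + v *\<^sub>R z \<in> V"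
      unfolding V_def eq using yS by (intro UN_I[of yy]) (auto simp: yy_def)
  qed
  have FV: "F holomorphic_on V" using FU VN by (auto simp: N_def intro: holomorphic_on_subset)
  have nz: "1 + complex_of_real beta * F z \<noteq> 0" if "z \<in> V" for z using VN that by (auto simp: N_def)
  define p where "p z = z / (1 + complex_of_real beta * F z)" for z
  have hp: "p holomorphic_on V" unfolding p_def by (intro holomorphic_intros FV nz)
  obtain P where P0: "\<And>z. z \<in> V \<Longrightarrow> (P has_field_derivative p z) (at z within V)"
    using holomorphic_convex_primitive'[OF cV oV hp] by blast
  have P: "(P has_field_derivative p z) (at z)" if "z \<in> V" for z
    using P0[OF that] at_within_open[OF that oV] by simp
  have hP: "P holomorphic_on V" using P by (auto simp: holomorphic_on_open[OF oV])
  define W where "W z = exp (-2 * (P z - P 0)) / (1 + complex_of_real beta * F z)" for z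
  have hW: "W holomorphic_on V" unfolding W_def by (intro holomorphic_intros FV nz hP)
  obtain Q where Q0: "\<And>z. z \<in> V \<Longrightarrow> (Q has_field_derivative W z) (at z within V)"
    using holomorphic_convex_primitive'[OF cV oV hW] by blast
  have Q: "(Q has_field_derivative W z) (at z)" if "z \<in> V" for z
    using Q0[OF that] at_within_open[OF that oV] by simp
  have hQ: "Q holomorphic_on V" using Q by (auto simp: holomorphic_on_open[OF oV])
  have sub: "{0..t} \<subseteq> S" if "t \<in> S" for t using that by (auto simp: S_def)
  have chain: "((\<lambda>s. G (complex_of_real s)) has_vector_derivative of_real (g s)) (at s within {0..t})"
    if "\<And>z. z \<in> V \<Longrightarrow> (G has_field_derivative G' z) (at z)" "s \<in> S"
       "G' (of_real s) = of_real (g s)" for G G' g s t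
  proof -
    have "((\<lambda>x. complex_of_real x) has_vector_derivative of_real 1) (at s)"
      by (rule has_vector_derivative_of_real) (rule DERIV_ident)
    from field_vector_diff_chain_at[OF this that(1)[OF SV[OF that(2)]]]
    have "((\<lambda>s. G (complex_of_real s)) has_vector_derivative of_real (g s)) (at s)"
      using that(3) by (simp add: o_def)
    then show ?thesis by (rule has_vector_derivative_at_within)
  qed
  define I where "I t = integral {0..t} (\<lambda>\<xi>. \<xi> / Psi beta h \<xi>)" for t
  have PI: "P (of_real t) - P 0 = of_real (I t)" if "t \<in> S" for t
  proof -
    have "t \<ge> 0" using that by (simp add: S_def)
    have "((\<lambda>\<xi>. \<xi> / Psi beta h \<xi>) has_integral Re (P (of_real t) - P (of_real 0))) {0..t} \<and>
        P (of_real t) - P (of_real 0) = of_real (integral {0..t} (\<lambda>\<xi>. \<xi> / Psi beta h \<xi>))"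
    proof (rule ftc_complex_real[OF \<open>t \<ge> 0\<close>])
      fix s assume s: "s \<in> {0..t}"
      then have sS: "s \<in> S" using sub[OF that] by blast
      show "((\<lambda>s. P (complex_of_real s)) has_vector_derivative of_real (s / Psi beta h s)) (at s within {0..t})"
      proof (rule chain[OF P sS])
        have "F (of_real s) = of_real (h s)" using UF[OF sS] by blast
        then show "p (complex_of_real s) = complex_of_real (s / Psi beta h s)"
          by (simp add: p_def Psi_def)
      qed
    qed
    then show ?thesis by (simp add: I_def)
  qed
  have Wr: "W (of_real t) = of_real (weight beta h t)" if "t \<in> S" for t
  proof -
    have "W (of_real t) = exp (of_real (-2 * I t)) / of_real (Psi beta h t)"
      using PI[OF that] UF[OF that] by (simp add: W_def Psi_def)
    also have "\<dots> = of_real (weight beta h t)"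
      by (simp add: weight_def I_def exp_of_real[symmetric] del: exp_of_real)
    finally show ?thesis .
  qed
  have QI: "(weight beta h has_integral Re (Q (of_real t) - Q 0)) {0..t} \<and>
      Q (of_real t) - Q 0 = of_real (integral {0..t} (weight beta h))" if "t \<in> S" for t
  proof -
    have "t \<ge> 0" using that by (simp add: S_def)
    have "(weight beta h has_integral Re (Q (of_real t) - Q (of_real 0))) {0..t} \<and>
        Q (of_real t) - Q (of_real 0) = of_real (integral {0..t} (weight beta h))"
    proof (rule ftc_complex_real[OF \<open>t \<ge> 0\<close>])
      fix s assume s: "s \<in> {0..t}"
      then have sS: "s \<in> S" using sub[OF that] by blast
      show "((\<lambda>s. Q (complex_of_real s)) has_vector_derivative of_real (weight beta h s)) (at s within {0..t})"
      proof (rule chain[OF Q sS])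
        show "W (complex_of_real s) = complex_of_real (weight beta h s)" by (rule Wr[OF sS])
      qed
    qed
    then show ?thesis unfolding of_real_0 .
  qed
  have wnn: "weight beta h t \<ge> 0" if "t \<in> S" for t
    using psi1[OF that] by (simp add: weight_def)
  have intw: "weight beta h integrable_on {0..t}" if "t \<in> S" for t
    using QI[OF that] by blast
  have lamS: "lam \<in> S" using assms(1) by (simp add: S_def)
  define Il where "Il = integral {0..lam} (weight beta h)"
  have Il0: "Il \<ge> 0" unfolding Il_def
    by (rule integral_nonneg[OF intw[OF lamS]]) (use wnn sub[OF lamS] in blast)
  define D where "D = D_h lam gam beta h"
  have D: "D = gam / (1 + gam * Il)" by (simp add: D_def D_h_def Il_def field_simps)
  have Dpos: "D > 0" using D assms(2) Il0 by (simp add: add_pos_nonneg)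
  have tau_eq: "tau lam gam beta h t = D * (1 / gam + integral {0..t} (weight beta h))" for t
    by (simp add: tau_def D_def)
  have bnd: "0 \<le> tau lam gam beta h t \<and> tau lam gam beta h t \<le> 1" if "t \<in> S" for t
  proof -
    have i0: "integral {0..t} (weight beta h) \<ge> 0"
      by (rule integral_nonneg[OF intw[OF that]]) (use wnn sub[OF that] in blast)
    have il: "integral {0..t} (weight beta h) \<le> Il" unfolding Il_def
      by (rule integral_subset_le[OF _ intw[OF that] intw[OF lamS]]) (use that wnn in \<open>auto simp: S_def\<close>)
    have "tau lam gam beta h t \<le> D * (1 / gam + Il)"
      unfolding tau_eq using Dpos il by simp
    also have "\<dots> = 1"
    proof -
      have pos: "1 + gam * Il > 0" using assms(2) Il0 by (simp add: add_pos_nonneg)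
      have e1: "1 / gam + Il = (1 + gam * Il) / gam"
        using assms(2) by (simp add: add_divide_distrib)
      have "D * (1 / gam + Il) = gam / (1 + gam * Il) * ((1 + gam * Il) / gam)"
        unfolding D e1 by (rule refl)
      also have "\<dots> = 1" using pos assms(2) by simp
      finally show ?thesis .
    qed
    finally show ?thesis unfolding tau_eq using Dpos i0 assms(2) by simp
  qed
  define T where "T z = complex_of_real D * (1 / of_real gam + (Q z - Q 0))" for z
  have hT: "T holomorphic_on V" unfolding T_def by (intro holomorphic_intros hQ)
  have "real_analytic_on (tau lam gam beta h) S"
  proof (rule holo_to_real_analytic[OF oV hT])
    fix y assume y: "y \<in> S"
    show "complex_of_real y \<in> V \<and> T (of_real y) = of_real (tau lam gam beta h y)"
      using SV[OF y] QI[OF y] by (simp add: T_def tau_eq)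
  qed
  then show "tau lam gam beta h \<in> K_set lam"
    using bnd unfolding K_set_def X_space_def S_def by (auto intro!: exI[of _ 1])
qed

end
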